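(* Let $d\in\mathbb{N}_+$ with $d>1$, and let $\sigma:\mathbb{R}\to\mathbb{R}$ be a Lipschitz activation function. Then the set $\mathrm{NODE}_{\sigma}([0,1]^d)$ is not universal in $\mathcal{H}_d([0,1]^d)$, i.e. it is not dense in $\mathcal{H}_d([0,1]^d)$ with respect to the uniform metric $d_\infty(\varphi,\psi)=\sup_{x\in\mathbb{R}^d}\|\varphi(x)-\psi(x)\|$.
   Context: For $P\subseteq\mathbb{R}^d$, $\mathcal{H}_d(P)$ denotes the set of orientation-preserving (i.e. homotopic to the identity) homeomorphisms $\varphi:\mathbb{R}^d\to\mathbb{R}^d$ that are compactly supported$^\dagger$ on $P$, meaning $\varphi(x)=x$ for every $x$ outside a compact subset of $P$ (for $P=[0,1]^d$: $\varphi(x)=x$ for all $x\notin[0,1]^d$). It carries the uniform metric $d_\infty$, which is finite on $\mathcal{H}_d(P)$ for compact $P$. A $\sigma$-MLP $\Phi:\mathbb{R}^{d_1}\to\mathbb{R}^{d_{\Delta+1}}$ is a map of the form $\Phi(x)=W^{(\Delta)}x^{(\Delta)}+b^{(\Delta)}$, $x^{(l+1)}=\sigma\bullet(W^{(l)}x^{(l)}+b^{(l)})$ for $l=1,\dots,\Delta-1$, $x^{(1)}=x$, with real weight matrices $W^{(l)}$, biases $b^{(l)}$, and $\sigma$ applied componentwise (any depth and width). For a Lipschitz vector field $V:\mathbb{R}^d\to\mathbb{R}^d$, $\mathrm{Flow}(V)$ is the time-$1$ map $x\mapsto x_1^x$ of the ODE $\dot x_t^x=V(x_t^x)$, $x_0^x=x$.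 $\mathrm{NODE}_\sigma(P)$ is the set of maps $\mathrm{Flow}(\Phi)\in\mathcal{H}_d(P)$ where $\Phi:\mathbb{R}^d\to\mathbb{R}^d$ is a $\sigma$-MLP that vanishes outside $P$. *)

theory Defs
  imports "HOL-Analysis.Analysis"
begin

definition affine_layer :: "nat \<Rightarrow> (nat \<Rightarrow> nat \<Rightarrow> real) \<Rightarrow> (nat \<Rightarrow> real) \<Rightarrow> (nat \<Rightarrow> real) \<Rightarrow> (nat \<Rightarrow> real)"
  where "affine_layer n W b x = (\<lambda>i. (\<Sum>j<n. W i j * x j) + b i)"

text \<open>Evaluation of an MLP given as a nonempty list of layers (input width, W, b):
 activation after every layer except the last one.\<close>
fun mlp_eval :: "(real \<Rightarrow> real) \<Rightarrow> (nat \<times> (nat \<Rightarrow> nat \<Rightarrow> real) \<times> (nat \<Rightarrow> real)) list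
                 \<Rightarrow> (nat \<Rightarrow> real) \<Rightarrow> (nat \<Rightarrow> real)" where
  "mlp_eval \<sigma> [] x = x"
| "mlp_eval \<sigma> [(n, W, b)] x = affine_layer n W b x"
| "mlp_eval \<sigma> ((n, W, b) # L) x = mlp_eval \<sigma> L (\<lambda>i. \<sigma> (affine_layer n W b x i))"

text \<open>A sigma-MLP from R^d to R^d (d = CARD('n)); coordinates of real^'n are
 identified with {0..<d} via some bijection e.\<close>
definition is_sigma_MLP :: "(real \<Rightarrow> real) \<Rightarrow> (real^'n \<Rightarrow> real^'n) \<Rightarrow> bool" where
  "is_sigma_MLP \<sigma> \<Phi> \<longleftrightarrow> (\<exists>L (e :: 'n \<Rightarrow> nat). L \<noteq> [] \<and> fst (hd L) = CARD('n) \<and>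
      bij_betw e UNIV {..<CARD('n)} \<and>
      (\<forall>x. \<Phi> x = (\<chi> i. mlp_eval \<sigma> L (\<lambda>j. x $ (inv_into UNIV e j)) (e i))))"

definition Flow :: "('a::real_normed_vector \<Rightarrow> 'a) \<Rightarrow> 'a \<Rightarrow> 'a" where
  "Flow V x = (THE y. \<exists>\<gamma>. \<gamma> 0 = x \<and> \<gamma> 1 = y \<and>
       (\<forall>t\<in>{0..1}. (\<gamma> has_vector_derivative V (\<gamma> t)) (at t within {0..1})))"

definition H :: "(real^'n) set \<Rightarrow> (real^'n \<Rightarrow> real^'n) set" where
  "H P = {\<phi>. homeomorphism UNIV UNIV \<phi> (inv \<phi>) \<and>
              homotopic_with_canon (\<lambda>_. True) UNIV UNIV \<phi> id \<and>
              (\<exists>K. compact K \<and> K \<subseteq> P \<and> (\<forall>x. x \<notin> K \<longrightarrow> \<phi> x = x))}"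

definition NODE :: "(real \<Rightarrow> real) \<Rightarrow> (real^'n) set \<Rightarrow> (real^'n \<Rightarrow> real^'n) set" where
  "NODE \<sigma> P = {Flow \<Phi> | \<Phi>. is_sigma_MLP \<sigma> \<Phi> \<and> (\<forall>x. x \<notin> P \<longrightarrow> \<Phi> x = 0) \<and> Flow \<Phi> \<in> H P}"

definition d_inf :: "('a \<Rightarrow> 'b::real_normed_vector) \<Rightarrow> ('a \<Rightarrow> 'b) \<Rightarrow> real" where
  "d_inf \<phi> \<psi> = (SUP x. norm (\<phi> x - \<psi> x))"

definition unit_cube :: "(real^'n) set" where
  "unit_cube = {x. \<forall>i. 0 \<le> x $ i \<and> x $ i \<le> 1}"

end

theory Submission
  imports Defs
begin


definition clampT :: "real \<Rightarrow> real \<Rightarrow> real" where "clampT T t = max 0 (min T t)"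

lemma clampT_in: "0 \<le> T \<Longrightarrow> clampT T t \<in> {0..T}" by (auto simp: clampT_def)
lemma clampT_id: "t \<in> {0..T} \<Longrightarrow> clampT T t = t" by (auto simp: clampT_def)
lemma continuous_on_clampT: "continuous_on UNIV (clampT T)" unfolding clampT_def by (intro continuous_intros)

definition sol :: "('a::real_normed_vector \<Rightarrow> 'a) \<Rightarrow> 'a \<Rightarrow> real \<Rightarrow> (real \<Rightarrow> 'a) \<Rightarrow> bool" where
 "sol V x T \<gamma> \<longleftrightarrow> \<gamma> 0 = x \<and> (\<forall>t\<in>{0..T}. (\<gamma> has_vector_derivative V (\<gamma> t)) (at t within {0..T}))"

lemma sol_continuous: "sol V x T \<gamma> \<Longrightarrow> continuous_on {0..T} \<gamma>"
  unfolding sol_def continuous_on_eq_continuous_within using has_vector_derivative_continuous by blast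

lemma bcontfun_from_interval:
  fixes f :: "real \<Rightarrow> 'a::real_normed_vector"
  assumes "continuous_on {0..T} f" "0 \<le> T"
  shows "(\<lambda>t. f (clampT T t)) \<in> bcontfun"
proof -
  have c: "continuous_on UNIV (\<lambda>t. f (clampT T t))"
    by (rule continuous_on_compose2[OF assms(1) continuous_on_clampT]) (use clampT_in[OF assms(2)] in auto)
  have "range (\<lambda>t. f (clampT T t)) \<subseteq> f ` {0..T}" using clampT_in[OF assms(2)] by auto
  moreover have "bounded (f ` {0..T})" by (intro compact_imp_bounded compact_continuous_image assms(1) compact_Icc)
  ultimately have "bounded (range (\<lambda>t. f (clampT T t)))" using bounded_subset by blast
  with c show ?thesis unfolding bcontfun_def by simp
qed

lemma picard:
  fixes V :: "'a::banach \<Rightarrow> 'a"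
  assumes lip: "\<And>y z. norm (V y - V z) \<le> L * norm (y - z)" and L: "0 \<le> L" and T: "0 \<le> T"
  shows "\<exists>\<gamma>. sol V x T \<gamma> \<and> (\<forall>\<delta>. sol V x T \<delta> \<longrightarrow> (\<forall>t\<in>{0..T}. \<delta> t = \<gamma> t))"
proof -
  define k where "k = 2*L + 2"
  have k: "k > 0" using L by (simp add: k_def)
  have "L-lipschitz_on UNIV V" by (rule lipschitz_onI) (use lip L in \<open>auto simp: dist_norm\<close>)
  then have contV: "continuous_on UNIV V" by (rule lipschitz_on_continuous_on)
  define F where "F u s = V (exp (k * s) *\<^sub>R apply_bcontfun u s)" for u s
  have contF: "continuous_on UNIV (F u)" for u
    unfolding F_def by (intro continuous_on_compose2[OF contV] continuous_intros) auto
  have intF: "F u integrable_on {a..b}" for u a b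
    by (intro integrable_continuous_interval continuous_on_subset[OF contF]) auto
  define G where "G u \<tau> = exp (-k*\<tau>) *\<^sub>R (x + integral {0..\<tau>} (F u))" for u \<tau>
  have contG: "continuous_on {0..T} (G u)" for u
    unfolding G_def by (intro continuous_intros indefinite_integral_continuous_1 intF)
  define P where "P u = Bcontfun (\<lambda>t. G u (clampT T t))" for u
  have Pap: "apply_bcontfun (P u) t = G u (clampT T t)" for u t
    unfolding P_def by (simp add: Bcontfun_inverse[OF bcontfun_from_interval[OF contG T]])
  have contr: "dist (P u) (P w) \<le> (1/2) * dist u w" for u w
  proof (rule dist_bound)
    fix t
    define \<tau> where "\<tau> = clampT T t"
    have \<tau>: "\<tau> \<in> {0..T}" using clampT_in[OF T] \<tau>_def by simp
    define D where "D = dist u w"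
    have D: "D \<ge> 0" by (simp add: D_def)
    have "norm (integral {0..\<tau>} (F u) - integral {0..\<tau>} (F w)) = norm (integral {0..\<tau>} (\<lambda>s. F u s - F w s))"
      by (simp add: integral_diff intF)
    also have "\<dots> \<le> integral {0..\<tau>} (\<lambda>s. L * D * exp (k * s))"
    proof (rule integral_norm_bound_integral)
      show "(\<lambda>s. F u s - F w s) integrable_on {0..\<tau>}" by (intro integrable_diff intF)
      show "(\<lambda>s. L*D*exp(k * s)) integrable_on {0..\<tau>}" by (intro integrable_continuous_interval continuous_intros)
      fix s assume "s \<in> {0..\<tau>}"
      have "norm (F u s - F w s) \<le> L * norm (exp (k * s) *\<^sub>R u s - exp (k * s) *\<^sub>R w s)" unfolding F_def by (rule lip)
      also have "\<dots> = L * (exp (k * s) * dist (u s) (w s))" by (simp add: dist_norm flip: scaleR_diff_right)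
      also have "\<dots> \<le> L * (exp (k * s) * D)" unfolding D_def
        by (intro mult_left_mono dist_bounded) (use L in auto)
      finally show "norm (F u s - F w s) \<le> L * D * exp (k * s)" by (simp add: mult_ac)
    qed
    also have "integral {0..\<tau>} (\<lambda>s. L * D * exp (k * s)) = L * D * exp (k*\<tau>) / k - L * D / k"
    proof -
      have "((\<lambda>s. L*D*exp(k * s)) has_integral ((\<lambda>s. L*D*exp(k * s)/k) \<tau> - (\<lambda>s. L*D*exp(k * s)/k) 0)) {0..\<tau>}"
      proof (rule fundamental_theorem_of_calculus)
        show "0 \<le> \<tau>" using \<tau> by simp
        fix s
        have "((\<lambda>s. L*D*exp(k * s)/k) has_real_derivative L*D*exp(k * s)) (at s)"
          using k by (auto intro!: derivative_eq_intros)
        then show "((\<lambda>s. L*D*exp(k * s)/k) has_vector_derivative L*D*exp(k * s)) (at s within {0..\<tau>})"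
          by (simp add: has_real_derivative_iff_has_vector_derivative has_vector_derivative_at_within)
      qed
      from integral_unique[OF this] show ?thesis by simp
    qed
    finally have I: "norm (integral {0..\<tau>} (F u) - integral {0..\<tau>} (F w)) \<le> L * D * exp (k*\<tau>) / k - L * D / k" .
    have "dist (P u t) (P w t) = exp (-k*\<tau>) * norm (integral {0..\<tau>} (F u) - integral {0..\<tau>} (F w))"
      by (simp add: Pap G_def \<tau>_def[symmetric] dist_norm flip: scaleR_diff_right)
    also have "\<dots> \<le> exp (-k*\<tau>) * (L * D * exp (k*\<tau>) / k - L * D / k)"
      by (intro mult_left_mono I) auto
    also have "\<dots> = L * D / k - exp (-k*\<tau>) * (L * D / k)"
      by (simp add: field_simps exp_add[symmetric])
    also have "\<dots> \<le> L * D / k" using L D k by simp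
    also have "\<dots> \<le> 1/2 * D" using L D k by (simp add: k_def field_simps)
    finally show "dist (P u t) (P w t) \<le> 1/2 * dist u w" by (simp add: D_def)
  qed
  have "\<exists>!u. P u = u" by (rule banach_fix_type[of "1/2"]) (use contr in auto)
  then obtain u where fix_u: "P u = u" and uniq: "\<And>w. P w = w \<Longrightarrow> w = u" by blast
  define \<gamma> where "\<gamma> t = exp (k*t) *\<^sub>R apply_bcontfun u t" for t
  have Fu: "F u = (\<lambda>s. V (\<gamma> s))" by (simp add: F_def \<gamma>_def fun_eq_iff)
  have \<gamma>_eq: "\<gamma> t = x + integral {0..t} (\<lambda>s. V (\<gamma> s))" if "t \<in> {0..T}" for t
  proof -
    have "apply_bcontfun u t = G u t" using Pap[of u t] fix_u clampT_id[OF that] by simp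
    then show ?thesis by (simp add: \<gamma>_def G_def Fu exp_add[symmetric])
  qed
  have sol\<gamma>: "sol V x T \<gamma>"
    unfolding sol_def
  proof
    show "\<gamma> 0 = x" using \<gamma>_eq[of 0] T by simp
    show "\<forall>t\<in>{0..T}. (\<gamma> has_vector_derivative V (\<gamma> t)) (at t within {0..T})"
    proof
      fix t assume t: "t \<in> {0..T}"
      have c: "continuous_on {0..T} (\<lambda>s. V (\<gamma> s))"
        using contF[of u] Fu by (metis continuous_on_subset subset_UNIV)
      have d: "((\<lambda>t. x + integral {0..t} (\<lambda>s. V (\<gamma> s))) has_vector_derivative V (\<gamma> t)) (at t within {0..T})"
        using integral_has_vector_derivative[OF c t] by (auto intro!: derivative_eq_intros)
      show "(\<gamma> has_vector_derivative V (\<gamma> t)) (at t within {0..T})"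
        by (rule has_vector_derivative_transform[OF t _ d]) (use \<gamma>_eq in auto)
    qed
  qed
  have "\<delta> t = \<gamma> t" if \<delta>: "sol V x T \<delta>" and t: "t \<in> {0..T}" for \<delta> t
  proof -
    define w where "w = Bcontfun (\<lambda>t. (\<lambda>\<tau>. exp (-k*\<tau>) *\<^sub>R \<delta> \<tau>) (clampT T t))"
    have cd: "continuous_on {0..T} (\<lambda>\<tau>. exp (-k*\<tau>) *\<^sub>R \<delta> \<tau>)"
      by (intro continuous_intros sol_continuous[OF \<delta>])
    have wap: "apply_bcontfun w t = exp (-k*clampT T t) *\<^sub>R \<delta> (clampT T t)" for t
      unfolding w_def by (subst Bcontfun_inverse[OF bcontfun_from_interval[OF cd T]]) simp
    have wd: "exp (k * s) *\<^sub>R apply_bcontfun w s = \<delta> s" if "s \<in> {0..T}" for s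
      using clampT_id[OF that] by (simp add: wap exp_add[symmetric])
    have "P w = w"
    proof (rule bcontfun_eqI)
      fix t
      define \<tau> where "\<tau> = clampT T t"
      have \<tau>: "\<tau> \<in> {0..T}" using clampT_in[OF T] \<tau>_def by simp
      have "integral {0..\<tau>} (F w) = integral {0..\<tau>} (\<lambda>s. V (\<delta> s))"
        by (rule integral_cong) (use \<tau> wd in \<open>auto simp: F_def\<close>)
      also have "\<dots> = \<delta> \<tau> - \<delta> 0"
      proof (rule integral_unique, rule fundamental_theorem_of_calculus)
        show "0 \<le> \<tau>" using \<tau> by simp
        fix s assume s: "s \<in> {0..\<tau>}"
        then have "s \<in> {0..T}" using \<tau> by auto
        then have "(\<delta> has_vector_derivative V (\<delta> s)) (at s within {0..T})" using \<delta> by (auto simp: sol_def)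
        then show "(\<delta> has_vector_derivative V (\<delta> s)) (at s within {0..\<tau>})"
          by (rule has_vector_derivative_within_subset) (use \<tau> in auto)
      qed
      finally show "apply_bcontfun (P w) t = apply_bcontfun w t"
        using \<delta> by (simp add: Pap G_def wap \<tau>_def[symmetric] sol_def)
    qed
    then have "w = u" by (rule uniq)
    then show ?thesis using wd[OF t] by (simp add: \<gamma>_def)
  qed
  with sol\<gamma> show ?thesis by blast
qed


lemma sol_unique:
  fixes V :: "'a::banach \<Rightarrow> 'a"
  assumes lip: "\<And>y z. norm (V y - V z) \<le> L * norm (y - z)" and L: "0 \<le> L"
    and s1: "sol V x T \<delta>1" and s2: "sol V x T \<delta>2" and t: "t \<in> {0..T}"
  shows "\<delta>1 t = \<delta>2 t"
proof -
  have T: "0 \<le> T" using t by simp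
  obtain \<gamma> where "\<forall>\<delta>. sol V x T \<delta> \<longrightarrow> (\<forall>t\<in>{0..T}. \<delta> t = \<gamma> t)"
    using picard[OF lip L T, of x] by blast
  then show ?thesis using s1 s2 t by metis
qed

lemma sol_exists:
  fixes V :: "'a::banach \<Rightarrow> 'a"
  assumes lip: "\<And>y z. norm (V y - V z) \<le> L * norm (y - z)" and L: "0 \<le> L" and T: "0 \<le> T"
  obtains \<gamma> where "sol V x T \<gamma>"
  using picard[OF lip L T, of x] by blast

lemma sol_restrict:
  assumes "sol V x T \<gamma>" "0 \<le> T'" "T' \<le> T"
  shows "sol V x T' \<gamma>"
  using assms unfolding sol_def
  by (metis atLeastAtMost_iff atLeastatMost_subset_iff dual_order.trans has_vector_derivative_within_subset order_refl)

lemma sol_shift: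
  assumes sl: "sol V x T \<gamma>" and s: "s \<in> {0..T}"
  shows "sol V (\<gamma> s) (T - s) (\<lambda>t. \<gamma> (s + t))"
  unfolding sol_def
proof safe
  fix t assume t: "t \<in> {0..T - s}"
  have d1: "((\<lambda>t. s + t) has_vector_derivative 1) (at t within {0..T - s})"
    by (auto intro!: derivative_eq_intros)
  have "s + t \<in> {0..T}" using s t by auto
  then have "(\<gamma> has_vector_derivative V (\<gamma> (s + t))) (at (s + t) within {0..T})"
    using sl by (auto simp: sol_def)
  then have d2: "(\<gamma> has_vector_derivative V (\<gamma> (s + t))) (at (s + t) within (\<lambda>t. s + t) ` {0..T - s})"
    by (rule has_vector_derivative_within_subset) (use s in auto)
  show "((\<lambda>t. \<gamma> (s + t)) has_vector_derivative V (\<gamma> (s + t))) (at t within {0..T - s})"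
    using vector_diff_chain_within[OF d1 d2] by (simp add: o_def)
qed simp

lemma Flow_sol:
  fixes V :: "'a::banach \<Rightarrow> 'a"
  assumes lip: "\<And>y z. norm (V y - V z) \<le> L * norm (y - z)" and L: "0 \<le> L"
    and sl: "sol V x T \<gamma>" and T: "1 \<le> T"
  shows "Flow V x = \<gamma> 1"
proof -
  have s1: "sol V x 1 \<gamma>" by (rule sol_restrict[OF sl]) (use T in auto)
  show ?thesis unfolding Flow_def
  proof (rule the_equality)
    show "\<exists>\<gamma>'. \<gamma>' 0 = x \<and> \<gamma>' 1 = \<gamma> 1 \<and> (\<forall>t\<in>{0..1}. (\<gamma>' has_vector_derivative V (\<gamma>' t)) (at t within {0..1}))"
      using s1 by (auto simp: sol_def)
    fix y assume "\<exists>\<gamma>'. \<gamma>' 0 = x \<and> \<gamma>' 1 = y \<and> (\<forall>t\<in>{0..1}. (\<gamma>' has_vector_derivative V (\<gamma>' t)) (at t within {0..1}))"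
    then obtain \<gamma>' where "sol V x 1 \<gamma>'" "\<gamma>' 1 = y" by (auto simp: sol_def)
    then show "y = \<gamma> 1" using sol_unique[OF lip L _ s1, of \<gamma>' 1] by auto
  qed
qed

lemma affine_lip:
  "\<exists>M\<ge>0. \<forall>x y. \<bar>affine_layer n W b x i - affine_layer n W b y i\<bar> \<le> M * (\<Sum>j<n. \<bar>x j - y j\<bar>)"
proof (intro exI conjI allI)
  let ?M = "\<Sum>j<n. \<bar>W i j\<bar>"
  show "?M \<ge> 0" by (simp add: sum_nonneg)
  fix x y :: "nat \<Rightarrow> real"
  have "\<bar>affine_layer n W b x i - affine_layer n W b y i\<bar> = \<bar>\<Sum>j<n. W i j * (x j - y j)\<bar>"
    by (simp add: affine_layer_def sum_subtractf right_diff_distrib)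
  also have "\<dots> \<le> (\<Sum>j<n. \<bar>W i j\<bar> * \<bar>x j - y j\<bar>)"
    by (rule order_trans[OF sum_abs]) (simp add: abs_mult)
  also have "\<dots> \<le> (\<Sum>j<n. ?M * \<bar>x j - y j\<bar>)"
  proof (rule sum_mono)
    fix j assume "j \<in> {..<n}"
    then have "\<bar>W i j\<bar> \<le> ?M" by (intro member_le_sum) auto
    then show "\<bar>W i j\<bar> * \<bar>x j - y j\<bar> \<le> ?M * \<bar>x j - y j\<bar>" by (intro mult_right_mono) auto
  qed
  finally show "\<bar>affine_layer n W b x i - affine_layer n W b y i\<bar> \<le> ?M * (\<Sum>j<n. \<bar>x j - y j\<bar>)"
    by (simp add: sum_distrib_left)
qed

lemma mlp_lip:
  assumes sig: "\<And>a b. \<bar>\<sigma> a - \<sigma> b\<bar> \<le> Cs * \<bar>a - b\<bar>" and Cs: "0 \<le> Cs"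
  shows "Ls \<noteq> [] \<Longrightarrow> \<exists>C\<ge>0. \<forall>x y. \<bar>mlp_eval \<sigma> Ls x i - mlp_eval \<sigma> Ls y i\<bar> \<le> C * (\<Sum>j<fst (hd Ls). \<bar>x j - y j\<bar>)"
proof (induction Ls arbitrary: i)
  case Nil then show ?case by simp
next
  case (Cons l Ls)
  obtain n W b where l: "l = (n, W, b)" by (cases l) auto
  show ?case
  proof (cases "Ls = []")
    case True
    then show ?thesis using affine_lip[of n W b i] by (simp add: l)
  next
    case False
    then obtain v vs where Ls: "Ls = v # vs" by (cases Ls) auto
    let ?n' = "fst (hd Ls)"
    have "\<forall>i. \<exists>C\<ge>0. \<forall>x y. \<bar>mlp_eval \<sigma> Ls x i - mlp_eval \<sigma> Ls y i\<bar> \<le> C * (\<Sum>j<?n'. \<bar>x j - y j\<bar>)"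
      using Cons.IH False by blast
    then obtain Cf where Cf: "\<And>i. Cf i \<ge> 0" "\<And>i x y. \<bar>mlp_eval \<sigma> Ls x i - mlp_eval \<sigma> Ls y i\<bar> \<le> Cf i * (\<Sum>j<?n'. \<bar>x j - y j\<bar>)"
      by metis
    have "\<forall>j. \<exists>M\<ge>0. \<forall>x y. \<bar>affine_layer n W b x j - affine_layer n W b y j\<bar> \<le> M * (\<Sum>j<n. \<bar>x j - y j\<bar>)"
      using affine_lip by blast
    then obtain Mf where Mf: "\<And>j. Mf j \<ge> 0" "\<And>j x y. \<bar>affine_layer n W b x j - affine_layer n W b y j\<bar> \<le> Mf j * (\<Sum>j<n. \<bar>x j - y j\<bar>)"
      by metis
    show ?thesis
    proof (intro exI conjI allI)
      let ?C = "Cf i * (\<Sum>j<?n'. Cs * Mf j)"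
      show "?C \<ge> 0" using Cf Mf Cs by (simp add: sum_nonneg)
      fix x y :: "nat \<Rightarrow> real"
      let ?S = "\<Sum>j<n. \<bar>x j - y j\<bar>"
      have eq: "mlp_eval \<sigma> (l # Ls) z = mlp_eval \<sigma> Ls (\<lambda>i. \<sigma> (affine_layer n W b z i))" for z
        by (simp add: l Ls)
      have "\<bar>mlp_eval \<sigma> (l # Ls) x i - mlp_eval \<sigma> (l # Ls) y i\<bar>
          \<le> Cf i * (\<Sum>j<?n'. \<bar>\<sigma> (affine_layer n W b x j) - \<sigma> (affine_layer n W b y j)\<bar>)"
        unfolding eq by (rule Cf(2))
      also have "\<dots> \<le> Cf i * (\<Sum>j<?n'. Cs * Mf j * ?S)"
      proof (intro mult_left_mono sum_mono Cf(1))
        fix j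
        have "\<bar>\<sigma> (affine_layer n W b x j) - \<sigma> (affine_layer n W b y j)\<bar> \<le> Cs * \<bar>affine_layer n W b x j - affine_layer n W b y j\<bar>"
          by (rule sig)
        also have "\<dots> \<le> Cs * (Mf j * ?S)" by (intro mult_left_mono Mf(2) Cs)
        finally show "\<bar>\<sigma> (affine_layer n W b x j) - \<sigma> (affine_layer n W b y j)\<bar> \<le> Cs * Mf j * ?S"
          by (simp add: mult_ac)
      qed
      also have "\<dots> = ?C * ?S" by (simp add: sum_distrib_right mult_ac)
      finally show "\<bar>mlp_eval \<sigma> (l # Ls) x i - mlp_eval \<sigma> (l # Ls) y i\<bar> \<le> ?C * (\<Sum>j<fst (hd (l # Ls)). \<bar>x j - y j\<bar>)"
        by (simp add: l)
    qed
  qed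
qed

lemma MLP_lip:
  fixes \<Phi> :: "real^'n \<Rightarrow> real^'n"
  assumes "is_sigma_MLP \<sigma> \<Phi>" and sig: "\<And>a b. \<bar>\<sigma> a - \<sigma> b\<bar> \<le> Cs * \<bar>a - b\<bar>" and Cs: "0 \<le> Cs"
  shows "\<exists>L\<ge>0. \<forall>y z. norm (\<Phi> y - \<Phi> z) \<le> L * norm (y - z)"
proof -
  obtain Ls and e :: "'n \<Rightarrow> nat" where Ls: "Ls \<noteq> []" "fst (hd Ls) = CARD('n)"
    and \<Phi>: "\<And>x. \<Phi> x = (\<chi> i. mlp_eval \<sigma> Ls (\<lambda>j. x $ (inv_into UNIV e j)) (e i))"
    using assms(1) unfolding is_sigma_MLP_def by blast
  have "\<forall>i. \<exists>C\<ge>0. \<forall>x y. \<bar>mlp_eval \<sigma> Ls x i - mlp_eval \<sigma> Ls y i\<bar> \<le> C * (\<Sum>j<fst (hd Ls). \<bar>x j - y j\<bar>)"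
    using mlp_lip[OF sig Cs Ls(1)] by blast
  then obtain Cf where Cf: "\<And>i. Cf i \<ge> 0" "\<And>i x y. \<bar>mlp_eval \<sigma> Ls x i - mlp_eval \<sigma> Ls y i\<bar> \<le> Cf i * (\<Sum>j<CARD('n). \<bar>x j - y j\<bar>)"
    using Ls(2) by metis
  define L where "L = (\<Sum>i\<in>UNIV. Cf (e i)) * CARD('n)"
  show ?thesis
  proof (intro exI conjI allI)
    show "L \<ge> 0" unfolding L_def using Cf(1) by (simp add: sum_nonneg)
    fix y z :: "real^'n"
    have "norm (\<Phi> y - \<Phi> z) \<le> (\<Sum>i\<in>UNIV. \<bar>(\<Phi> y - \<Phi> z) $ i\<bar>)" by (rule norm_le_l1_cart)
    also have "\<dots> \<le> (\<Sum>i\<in>UNIV. Cf (e i) * (CARD('n) * norm (y - z)))"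
    proof (rule sum_mono)
      fix i
      have "\<bar>(\<Phi> y - \<Phi> z) $ i\<bar> \<le> Cf (e i) * (\<Sum>j<CARD('n). \<bar>y $ (inv_into UNIV e j) - z $ (inv_into UNIV e j)\<bar>)"
        using Cf(2) by (simp add: \<Phi>)
      also have "\<dots> \<le> Cf (e i) * (\<Sum>j<CARD('n). norm (y - z))"
      proof (intro mult_left_mono sum_mono Cf(1))
        fix j show "\<bar>y $ (inv_into UNIV e j) - z $ (inv_into UNIV e j)\<bar> \<le> norm (y - z)"
          using component_le_norm_cart[of "y - z"] by simp
      qed
      finally show "\<bar>(\<Phi> y - \<Phi> z) $ i\<bar> \<le> Cf (e i) * (CARD('n) * norm (y - z))" by simp
    qed
    also have "\<dots> = L * norm (y - z)" by (simp add: L_def sum_distrib_right flip: sum_distrib_left) (simp add: mult_ac)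
    finally show "norm (\<Phi> y - \<Phi> z) \<le> L * norm (y - z)" .
  qed
qed



definition rot :: "'n \<Rightarrow> 'n \<Rightarrow> real \<Rightarrow> real^'n \<Rightarrow> real^'n" where
  "rot i j \<alpha> v = (\<chi> k. if k = i then cos \<alpha> * v$i - sin \<alpha> * v$j
                      else if k = j then sin \<alpha> * v$i + cos \<alpha> * v$j else v$k)"

lemma continuous_on_rot:
  fixes A :: "'a::metric_space \<Rightarrow> real"
  assumes "continuous_on S A" "continuous_on S v"
  shows "continuous_on S (\<lambda>x. rot i j (A x) (v x))"
  unfolding rot_def
proof (rule continuous_on_vec_lambda)
  fix k
  have cs: "continuous_on S (\<lambda>x. cos (A x))" "continuous_on S (\<lambda>x. sin (A x))"
    using assms(1) by (auto intro: continuous_on_cos continuous_on_sin)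
  show "continuous_on S (\<lambda>x. if k = i then cos (A x) * v x $ i - sin (A x) * v x $ j
          else if k = j then sin (A x) * v x $ i + cos (A x) * v x $ j else v x $ k)"
    by (cases "k = i"; cases "k = j") (auto intro!: continuous_intros assms cs)
qed

context
  fixes i j :: "'n::finite"
  assumes ij: "i \<noteq> j"
begin

lemma rot_rot: "rot i j \<alpha> (rot i j \<beta> v) = rot i j (\<alpha> + \<beta>) v"
  using ij by (simp add: vec_eq_iff rot_def cos_add sin_add algebra_simps)

lemma rot_0: "rot i j 0 v = v"
  by (simp add: vec_eq_iff rot_def)

lemma rot_diff: "rot i j \<alpha> (v - w) = rot i j \<alpha> v - rot i j \<alpha> w"
  by (simp add: vec_eq_iff rot_def algebra_simps)

lemma inner_rot: "inner (rot i j \<alpha> v) (rot i j \<alpha> v) = inner v v"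
proof -
  have split: "(\<Sum>k\<in>UNIV. f k) = f i + f j + (\<Sum>k\<in>UNIV - {i} - {j}. f k)" for f :: "'n \<Rightarrow> real"
    using ij by (simp add: sum.remove[of UNIV i] sum.remove[of "UNIV - {i}" j] algebra_simps)
  have rest: "(\<Sum>k\<in>UNIV - {i} - {j}. rot i j \<alpha> v $ k * rot i j \<alpha> v $ k) = (\<Sum>k\<in>UNIV - {i} - {j}. v $ k * v $ k)"
    by (rule sum.cong) (auto simp: rot_def)
  have "(cos \<alpha> * v$i - sin \<alpha> * v$j) * (cos \<alpha> * v$i - sin \<alpha> * v$j) + (sin \<alpha> * v$i + cos \<alpha> * v$j) * (sin \<alpha> * v$i + cos \<alpha> * v$j)
     = ((sin \<alpha>)\<^sup>2 + (cos \<alpha>)\<^sup>2) * (v$i * v$i + v$j * v$j)"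
    unfolding power2_eq_square by algebra
  also have "\<dots> = v$i * v$i + v$j * v$j" by (simp only: sin_cos_squared_add mult_1_left)
  finally have ij_part: "(cos \<alpha> * v$i - sin \<alpha> * v$j) * (cos \<alpha> * v$i - sin \<alpha> * v$j) + (sin \<alpha> * v$i + cos \<alpha> * v$j) * (sin \<alpha> * v$i + cos \<alpha> * v$j)
     = v$i * v$i + v$j * v$j" .
  have "rot i j \<alpha> v $ i * rot i j \<alpha> v $ i + rot i j \<alpha> v $ j * rot i j \<alpha> v $ j = v$i * v$i + v$j * v$j"
    using ij ij_part by (simp add: rot_def)
  then show ?thesis
    unfolding inner_vec_def inner_real_def split[of "\<lambda>k. rot i j \<alpha> v $ k * rot i j \<alpha> v $ k"] split[of "\<lambda>k. v $ k * v $ k"] rest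
    by linarith
qed

lemma norm_rot: "norm (rot i j \<alpha> v) = norm v"
  using inner_rot by (simp add: norm_eq_sqrt_inner)

end


lemma rot_pi: "rot i j pi v = (\<chi> k. if k = i \<or> k = j then - v$k else v$k)"
  by (simp add: vec_eq_iff rot_def)

lemma rot_pi_pi: "rot i j pi (rot i j pi v) = v"
  by (simp add: rot_pi vec_eq_iff)

lemma tri: "norm (x - z) \<le> norm (x - y) + norm (y - (z::'a::real_normed_vector))"
  using norm_triangle_ineq[of "x - y" "y - z"] by simp

definition mf :: "real \<Rightarrow> real" where "mf s = min 1 (3/2 - (1/16) / (2 * max s (1/32)))"
definition kf :: "real \<Rightarrow> real" where "kf t = max 1 ((2 + (1/16) / max t (1/64)) / 3)"

lemma aux_inv_le1: "1 \<le> x \<Longrightarrow> 1/x \<le> (1::real)" by simp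

lemma mf_bounds: "1/2 \<le> mf s" "mf s \<le> 1"
proof -
  have M: "1 \<le> 32 * max s (1/32)" by (simp add: max_def)
  have e: "(1/16) / (2 * max s (1/32)) = 1 / (32 * max s (1/32))" by simp
  have "1 / (32 * max s (1/32)) \<le> 1" using M by (rule aux_inv_le1)
  then show "1/2 \<le> mf s" by (simp only: mf_def e min.bounded_iff) (intro conjI; linarith)
  show "mf s \<le> 1" by (simp add: mf_def)
qed

lemma kf_ge1: "1 \<le> kf t" by (simp add: kf_def)

lemma mf_small: "s \<le> 1/32 \<Longrightarrow> mf s = 1/2" by (simp add: mf_def max_def)
lemma mf_big: "1/16 \<le> s \<Longrightarrow> mf s = 1" by (simp add: mf_def max_def field_simps)
lemma kf_big: "1/16 \<le> t \<Longrightarrow> kf t = 1" by (simp add: kf_def max_def field_simps)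

lemma km: assumes "0 \<le> s" shows "kf (mf s * s) * mf s = 1"
proof (cases "s \<le> 1/32")
  case True
  then have m: "mf s = 1/2" by (rule mf_small)
  have k: "kf (s/2) = 2" using True by (simp add: kf_def max_def)
  have ms: "mf s * s = s/2" unfolding m by simp
  show ?thesis unfolding ms k unfolding m by simp
next
  case F1: False
  show ?thesis
  proof (cases "s < 1/16")
    case True
    have m: "mf s = 3/2 - 1/(32 * s)" using F1 True by (simp add: mf_def max_def min_def field_simps)
    have ms: "mf s * s = 3* s/2 - 1/32" using F1 by (simp add: m field_simps)
    have "1/64 \<le> mf s * s" "mf s * s \<le> 1/16" using F1 True by (simp_all add: ms)
    then have k: "kf (mf s * s) = (2 + 1/(16 * (mf s * s))) / 3"
      by (simp add: kf_def max_def field_simps)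
    show ?thesis unfolding k using F1 by (simp add: ms m field_simps)
  next
    case False
    then show ?thesis by (simp add: mf_big kf_big)
  qed
qed

lemma mk: assumes "0 \<le> t" shows "mf (kf t * t) * kf t = 1"
proof (cases "t \<le> 1/64")
  case True
  then have k: "kf t = 2" by (simp add: kf_def max_def)
  have m: "mf (2 * t) = 1/2" using True by (intro mf_small) simp
  show ?thesis unfolding k m by simp
next
  case F1: False
  show ?thesis
  proof (cases "t < 1/16")
    case True
    have k: "kf t = (2 + 1/(16 * t)) / 3" using F1 True by (simp add: kf_def max_def field_simps)
    have kt: "kf t * t = (2* t + 1/16)/3" using F1 by (simp add: k field_simps)
    have "1/32 \<le> kf t * t" "kf t * t \<le> 1/16" using F1 True by (simp_all add: kt)
    then have m: "mf (kf t * t) = 3/2 - 1/(32 * (kf t * t))"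
      using kf_ge1[of t] F1 by (simp add: mf_def max_def min_def field_simps)
    have tp: "0 < t" "0 < 2 * t + 1/16" "0 < 32 * t + 1" using F1 by auto
    have "0 < t * 1536" "0 < t * (t * 49152)" using tp(1) by auto
    then have tq: "t * 1536 + t * (t * 49152) \<noteq> 0" by linarith
    show ?thesis unfolding m unfolding kt unfolding k using tp tq by (simp add: field_simps)
  next
    case False
    then show ?thesis by (simp add: mf_big kf_big)
  qed
qed

lemma continuous_mf: "continuous_on UNIV mf"
  unfolding mf_def by (intro continuous_intros) (auto simp: max_def)

lemma continuous_kf: "continuous_on UNIV kf"
  unfolding kf_def by (intro continuous_intros) (auto simp: max_def)



lemma H_cont: "\<psi> \<in> H P \<Longrightarrow> continuous_on UNIV \<psi>"
  unfolding H_def homeomorphism_def by auto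

lemma H_close:
  fixes \<phi> \<psi> :: "real^'n \<Rightarrow> real^'n"
  assumes "\<phi> \<in> H P" "\<psi> \<in> H P"
  shows "norm (\<phi> x - \<psi> x) \<le> d_inf \<phi> \<psi>"
proof -
  obtain K1 where K1: "compact K1" "\<forall>x. x \<notin> K1 \<longrightarrow> \<phi> x = x" using assms(1) by (auto simp: H_def)
  obtain K2 where K2: "compact K2" "\<forall>x. x \<notin> K2 \<longrightarrow> \<psi> x = x" using assms(2) by (auto simp: H_def)
  define f where "f x = norm (\<phi> x - \<psi> x)" for x
  have cf: "continuous_on UNIV f" unfolding f_def
    using H_cont[OF assms(1)] H_cont[OF assms(2)] by (intro continuous_intros) auto
  have "f x \<in> f ` (K1 \<union> K2) \<union> {0}" for x
  proof (cases "x \<in> K1 \<union> K2")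
    case False
    then have "f x = 0" using K1 K2 by (simp add: f_def)
    then show ?thesis by simp
  qed auto
  then have "range f \<subseteq> f ` (K1 \<union> K2) \<union> {0}" by blast
  moreover have "bounded (f ` (K1 \<union> K2) \<union> {0})"
    by (intro bounded_Un compact_imp_bounded compact_continuous_image continuous_on_subset[OF cf] compact_Un K1(1) K2(1)) auto
  ultimately have "bdd_above (range f)" by (meson bounded_imp_bdd_above bounded_subset)
  then have "f x \<le> (SUP x. f x)" by (rule cSUP_upper[rotated]) simp
  then show ?thesis unfolding d_inf_def f_def .
qed

lemma half_lemma: "x - (y + (1/2) *\<^sub>R (x - y)) = (1/2) *\<^sub>R (x - (y::'a::real_vector))"
proof -
  have "x - (y + (1/2) *\<^sub>R (x - y)) = 1 *\<^sub>R (x - y) - (1/2) *\<^sub>R (x - y)" by simp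
  also have "\<dots> = (1 - 1/2) *\<^sub>R (x - y)" by (simp only: scaleR_diff_left)
  finally show ?thesis by simp
qed

theorem theorem1:
  fixes \<sigma> :: "real \<Rightarrow> real"
  assumes "CARD('n) > 1"
    and "\<exists>C. C-lipschitz_on UNIV \<sigma>"
  shows "\<exists>\<phi> \<in> H (unit_cube :: (real^'n) set). \<exists>\<epsilon>>0.
           \<forall>\<psi> \<in> NODE \<sigma> (unit_cube :: (real^'n) set). d_inf \<phi> \<psi> \<ge> \<epsilon>"
proof -
  have "\<not> CARD('n) \<le> Suc 0" using assms(1) by simp
  then obtain i j :: 'n where ij: "i \<noteq> j" using card_le_Suc0_iff_eq[of "UNIV :: 'n set"] by auto
  define c :: "real^'n" where "c = (\<chi> k. 1/2)"
  define e :: "real^'n" where "e = (1/8) *\<^sub>R axis i 1"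
  define a where "a = c + e"
  define b where "b = c - e"
  define \<theta> :: "real \<Rightarrow> real" where "\<theta> s = pi * max 0 (min 1 ((1/2 - s) * 4))" for s
  define R where "R x = c + rot i j (\<theta> (norm (x - c))) (x - c)" for x
  define Ri where "Ri x = c + rot i j (- \<theta> (norm (x - c))) (x - c)" for x
  define G where "G x = a + mf (norm (x - a)) *\<^sub>R (x - a)" for x
  define Gi where "Gi y = a + kf (norm (y - a)) *\<^sub>R (y - a)" for y
  define P where "P z = c + rot i j pi (z - c)" for z
  define \<phi> where "\<phi> = R \<circ> G"
  have normR: "norm (R x - c) = norm (x - c)" for x by (simp add: R_def norm_rot[OF ij])
  have normRi: "norm (Ri x - c) = norm (x - c)" for x by (simp add: Ri_def norm_rot[OF ij])
  have RiR: "Ri (R x) = x" for x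
    unfolding Ri_def normR by (simp add: R_def rot_rot[OF ij] rot_0[OF ij])
  have RRi: "R (Ri x) = x" for x
    unfolding R_def normRi by (simp add: Ri_def rot_rot[OF ij] rot_0[OF ij])
  have normG: "norm (G x - a) = mf (norm (x - a)) * norm (x - a)" for x
    using mf_bounds(1)[of "norm (x - a)"] by (simp add: G_def)
  have normGi: "norm (Gi x - a) = kf (norm (x - a)) * norm (x - a)" for x
    using kf_ge1[of "norm (x - a)"] by (simp add: Gi_def)
  have GiG: "Gi (G x) = x" for x
  proof -
    have "Gi (G x) = a + (kf (mf (norm (x - a)) * norm (x - a)) * mf (norm (x - a))) *\<^sub>R (x - a)"
      unfolding Gi_def normG by (simp add: G_def)
    then show ?thesis by (simp add: km)
  qed
  have GGi: "G (Gi x) = x" for x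
  proof -
    have "G (Gi x) = a + (mf (kf (norm (x - a)) * norm (x - a)) * kf (norm (x - a))) *\<^sub>R (x - a)"
      unfolding G_def normGi by (simp add: Gi_def)
    then show ?thesis by (simp add: mk)
  qed
  have c\<theta>: "continuous_on UNIV (\<lambda>x. \<theta> (norm (x - c)))" unfolding \<theta>_def by (intro continuous_intros)
  have cR: "continuous_on UNIV R" unfolding R_def
    by (intro continuous_intros continuous_on_rot c\<theta>)
  have cRi: "continuous_on UNIV Ri" unfolding Ri_def
    by (intro continuous_intros continuous_on_rot c\<theta>)
  have cm: "continuous_on UNIV (\<lambda>x. mf (norm (x - a)))"
    by (rule continuous_on_compose2[OF continuous_mf]) (auto intro!: continuous_intros)
  have ck: "continuous_on UNIV (\<lambda>x. kf (norm (x - a)))"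
    by (rule continuous_on_compose2[OF continuous_kf]) (auto intro!: continuous_intros)
  have cG: "continuous_on UNIV G" unfolding G_def by (intro continuous_intros cm)
  have cGi: "continuous_on UNIV Gi" unfolding Gi_def by (intro continuous_intros ck)
  have homR: "homeomorphism UNIV UNIV R Ri" by (rule homeomorphismI) (auto simp: cR cRi RiR RRi)
  have homG: "homeomorphism UNIV UNIV G Gi" by (rule homeomorphismI) (auto simp: cG cGi GiG GGi)
  have hom\<phi>: "homeomorphism UNIV UNIV \<phi> (Gi \<circ> Ri)"
    unfolding \<phi>_def by (rule homeomorphism_compose[OF homG homR])
  have inv\<phi>: "inv \<phi> = Gi \<circ> Ri" by (rule inv_equality) (auto simp: \<phi>_def RiR GiG RRi GGi)
  have c\<phi>: "continuous_on UNIV \<phi>" using hom\<phi> by (simp add: homeomorphism_def)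
  have \<theta>_in: "s \<le> 1/4 \<Longrightarrow> \<theta> s = pi" for s by (simp add: \<theta>_def)
  have \<theta>_out: "1/2 \<le> s \<Longrightarrow> \<theta> s = 0" for s by (simp add: \<theta>_def)
  have R_out: "1/2 \<le> norm (x - c) \<Longrightarrow> R x = x" for x by (simp add: R_def \<theta>_out rot_0[OF ij])
  have R_in: "norm (x - c) \<le> 1/4 \<Longrightarrow> R x = P x" for x by (simp add: R_def P_def \<theta>_in)
  have G_out: "1/16 \<le> norm (x - a) \<Longrightarrow> G x = x" for x by (simp add: G_def mf_big)
  have G_in: "norm (x - a) \<le> 1/32 \<Longrightarrow> G x = a + (1/2) *\<^sub>R (x - a)" for x by (simp add: G_def mf_small)
  have norm_e: "norm e = 1/8" by (simp add: e_def)
  have ac: "norm (a - c) = 1/8" "norm (c - a) = 1/8" using norm_e by (simp_all add: a_def)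
  have bc: "norm (b - c) = 1/8" "norm (c - b) = 1/8" using norm_e by (simp_all add: b_def)
  have ab_eq: "a - b = (1/4) *\<^sub>R axis i (1::real)" by (simp add: a_def b_def e_def vec_eq_iff axis_def)
  have ab1: "norm (a - b) = 1/4" by (simp add: ab_eq)
  have ab: "norm (a - b) = 1/4" "norm (b - a) = 1/4" using ab1 by (simp_all add: norm_minus_commute)
  have rot_e: "rot i j pi e = - e" by (simp add: rot_pi vec_eq_iff e_def axis_def)
  have Pa: "P a = b" by (simp add: P_def a_def b_def rot_e)
  have P_isom: "norm (P z - P w) = norm (z - w)" for z w
  proof -
    have "P z - P w = rot i j pi ((z - c) - (w - c))" by (simp add: P_def rot_diff[OF ij])
    then show ?thesis by (simp add: norm_rot[OF ij])
  qed
  have PP: "P (P z) = z" for z by (simp add: P_def rot_pi_pi)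
  have supp: "\<phi> x = x" if "x \<notin> cball c (1/2)" for x
  proof -
    have x: "1/2 < norm (x - c)" using that by (simp add: dist_norm norm_minus_commute)
    have "norm (x - c) \<le> norm (x - a) + norm (a - c)" by (rule tri)
    then have "1/16 \<le> norm (x - a)" using x ac by linarith
    then show ?thesis using x by (simp add: \<phi>_def G_out R_out)
  qed
  have cube: "cball c (1/2) \<subseteq> (unit_cube :: (real^'n) set)"
  proof
    fix x :: "real^'n" assume "x \<in> cball c (1/2)"
    then have n: "norm (x - c) \<le> 1/2" by (simp add: dist_norm norm_minus_commute)
    have hk: "\<bar>x $ k - 1/2\<bar> \<le> 1/2" for k
      using component_le_norm_cart[of "x - c" k] n by (simp add: c_def)
    have "0 \<le> x $ k \<and> x $ k \<le> 1" for k using hk[of k] unfolding abs_le_iff by linarith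
    then show "x \<in> unit_cube" unfolding unit_cube_def by blast
  qed
  have \<phi>H: "\<phi> \<in> H unit_cube"
    unfolding H_def
  proof (intro CollectI conjI)
    show "homeomorphism UNIV UNIV \<phi> (inv \<phi>)" using hom\<phi> inv\<phi> by simp
    show "homotopic_with_canon (\<lambda>_. True) UNIV UNIV \<phi> id"
      by (rule homotopic_with_linear) (auto simp: c\<phi> continuous_on_id)
    show "\<exists>K. compact K \<and> K \<subseteq> unit_cube \<and> (\<forall>x. x \<notin> K \<longrightarrow> \<phi> x = x)"
      using cube supp by (intro exI[of _ "cball c (1/2)"]) auto
  qed
  show ?thesis
  proof (intro bexI[of _ \<phi>] exI[of _ "1/256::real"] conjI ballI)
    show "(0::real) < 1/256" by simp
    show "\<phi> \<in> H unit_cube" by (rule \<phi>H)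
    fix \<psi> :: "real^'n \<Rightarrow> real^'n" assume "\<psi> \<in> NODE \<sigma> unit_cube"
    then obtain \<Phi> where \<psi>F: "\<psi> = Flow \<Phi>" and mlp: "is_sigma_MLP \<sigma> \<Phi>" and \<psi>H: "\<psi> \<in> H unit_cube"
      by (auto simp: NODE_def)
    obtain Cs where "Cs-lipschitz_on UNIV \<sigma>" using assms(2) by blast
    then have Cs: "0 \<le> Cs" "\<And>u v. \<bar>\<sigma> u - \<sigma> v\<bar> \<le> Cs * \<bar>u - v\<bar>"
      by (auto simp: lipschitz_on_def dist_real_def)
    obtain L where L: "0 \<le> L" "\<And>y z. norm (\<Phi> y - \<Phi> z) \<le> L * norm (y - z)"
      using MLP_lip[OF mlp Cs(2) Cs(1)] by blast
    have \<psi>c: "continuous_on UNIV \<psi>" by (rule H_cont[OF \<psi>H])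
    show "1/256 \<le> d_inf \<phi> \<psi>"
    proof (rule ccontr)
      assume "\<not> 1/256 \<le> d_inf \<phi> \<psi>"
      then have close: "norm (\<phi> x - \<psi> x) < 1/256" for x using H_close[OF \<phi>H \<psi>H, of x] by linarith
      have \<phi>a: "\<phi> x = P (a + (1/2) *\<^sub>R (x - a))" if x: "norm (x - a) \<le> 1/32" for x
      proof -
        have g: "G x = a + (1/2) *\<^sub>R (x - a)" by (rule G_in[OF x])
        have "norm (G x - c) \<le> norm (G x - a) + norm (a - c)" by (rule tri)
        then have "norm (G x - c) \<le> 1/4" using x ac by (simp add: g)
        then show ?thesis by (simp add: \<phi>_def R_in g)
      qed
      have \<phi>b: "\<phi> z = P z" if z: "norm (z - b) \<le> 1/16" for z
      proof -
        have "norm (a - b) \<le> norm (a - z) + norm (z - b)" by (rule tri)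
        then have "1/16 \<le> norm (z - a)" using z ab by (simp add: norm_minus_commute)
        then have g: "G z = z" by (rule G_out)
        have "norm (z - c) \<le> norm (z - b) + norm (b - c)" by (rule tri)
        then have "norm (z - c) \<le> 1/4" using z bc by simp
        then show ?thesis by (simp add: \<phi>_def R_in g)
      qed
      have Pb: "norm (P z - b) = norm (z - a)" for z using P_isom[of z a] Pa by simp
      have \<psi>b: "norm (\<psi> x - b) < 1/64 + 1/256" if x: "norm (x - a) \<le> 1/32" for x
      proof -
        have "norm (\<psi> x - b) \<le> norm (\<psi> x - \<phi> x) + norm (\<phi> x - b)" by (rule tri)
        moreover have "norm (\<phi> x - b) \<le> 1/64" using x by (simp add: \<phi>a[OF x] Pb)
        moreover have "norm (\<psi> x - \<phi> x) < 1/256" using close[of x] by (simp add: norm_minus_commute)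
        ultimately show ?thesis by linarith
      qed
      have E: "norm (\<psi> (\<psi> x) - (a + (1/2) *\<^sub>R (x - a))) < 2/256" if x: "norm (x - a) \<le> 1/32" for x
      proof -
        let ?g = "a + (1/2) *\<^sub>R (x - a)"
        have "\<phi> (\<psi> x) = P (\<psi> x)" by (rule \<phi>b) (use \<psi>b[OF x] in linarith)
        have "norm (\<phi> (\<psi> x) - ?g) = norm (\<psi> x - \<phi> x)"
          using P_isom[of "\<psi> x" "P ?g"] by (simp add: \<open>\<phi> (\<psi> x) = P (\<psi> x)\<close> PP \<phi>a[OF x])
        then have "norm (\<phi> (\<psi> x) - ?g) < 1/256" using close[of x] by (simp add: norm_minus_commute)
        moreover have "norm (\<psi> (\<psi> x) - ?g) \<le> norm (\<psi> (\<psi> x) - \<phi> (\<psi> x)) + norm (\<phi> (\<psi> x) - ?g)" by (rule tri)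
        moreover have "norm (\<psi> (\<psi> x) - \<phi> (\<psi> x)) < 1/256" using close[of "\<psi> x"] by (simp add: norm_minus_commute)
        ultimately show ?thesis by linarith
      qed
      obtain p where p: "p \<in> cball a (1/32)" "(\<psi> \<circ> \<psi>) p = p"
      proof (rule brouwer_ball[of "1/32" a "\<psi> \<circ> \<psi>"])
        show "(0::real) < 1/32" by simp
        show "continuous_on (cball a (1/32)) (\<psi> \<circ> \<psi>)"
          by (rule continuous_on_subset[OF continuous_on_compose[OF \<psi>c continuous_on_subset[OF \<psi>c]]]) auto
        show "\<psi> \<circ> \<psi> \<in> cball a (1/32) \<rightarrow> cball a (1/32)"
        proof
          fix x assume "x \<in> cball a (1/32)"
          then have x: "norm (x - a) \<le> 1/32" by (simp add: dist_norm norm_minus_commute)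
          have "norm (\<psi> (\<psi> x) - a) \<le> norm (\<psi> (\<psi> x) - (a + (1/2) *\<^sub>R (x - a))) + norm ((a + (1/2) *\<^sub>R (x - a)) - a)"
            by (rule tri)
          then have "norm (\<psi> (\<psi> x) - a) \<le> 1/32" using E[OF x] x by simp
          then show "(\<psi> \<circ> \<psi>) x \<in> cball a (1/32)" by (simp add: dist_norm norm_minus_commute)
        qed
      qed
      have pa: "norm (p - a) \<le> 1/32" using p(1) by (simp add: dist_norm norm_minus_commute)
      have "norm (p - (a + (1/2) *\<^sub>R (p - a))) < 2/256" using E[OF pa] p(2) by simp
      moreover have "p - (a + (1/2) *\<^sub>R (p - a)) = (1/2) *\<^sub>R (p - a)" by (rule half_lemma)
      ultimately have pa2: "norm (p - a) \<le> 1/32" by simp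
      have \<psi>pa: "1/32 \<le> norm (\<psi> p - a)"
      proof -
        have "norm (a - b) \<le> norm (a - \<psi> p) + norm (\<psi> p - b)" by (rule tri)
        then show ?thesis using \<psi>b[OF pa] ab by (simp add: norm_minus_commute)
      qed
      obtain \<gamma> where \<gamma>: "sol \<Phi> p 3 \<gamma>" using sol_exists[OF L(2) L(1), of 3] by auto
      have flow: "\<psi> (\<gamma> s) = \<gamma> (s + 1)" if s: "s \<in> {0..2}" for s
      proof -
        have "sol \<Phi> (\<gamma> s) (3 - s) (\<lambda>t. \<gamma> (s + t))" by (rule sol_shift[OF \<gamma>]) (use s in auto)
        from Flow_sol[OF L(2) L(1) this] s have "Flow \<Phi> (\<gamma> s) = \<gamma> (s + 1)" by (simp add: add.commute)
        then show ?thesis using \<psi>F by simp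
      qed
      have \<gamma>0: "\<gamma> 0 = p" using \<gamma> by (simp add: sol_def)
      have \<psi>p: "\<psi> p = \<gamma> 1" using flow[of 0] \<gamma>0 by simp
      have \<gamma>2: "\<gamma> 2 = p" using flow[of 1] p(2) \<psi>p by simp
      have per: "\<gamma> (t + 2) = \<gamma> t" if t: "t \<in> {0..1}" for t
      proof -
        have "sol \<Phi> (\<gamma> 2) (3 - 2) (\<lambda>s. \<gamma> (2 + s))" by (rule sol_shift[OF \<gamma>]) auto
        then have s2: "sol \<Phi> p 1 (\<lambda>s. \<gamma> (2 + s))" using \<gamma>2 by simp
        have s1: "sol \<Phi> p 1 \<gamma>" by (rule sol_restrict[OF \<gamma>]) auto
        show ?thesis using sol_unique[OF L(2) L(1) s2 s1 t] by (simp add: add.commute)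
      qed
      have cg: "continuous_on {0..1} (\<lambda>t. norm (\<gamma> t - a))"
        using sol_continuous[OF \<gamma>] by (auto intro!: continuous_intros intro: continuous_on_subset)
      obtain t where t: "0 \<le> t" "t \<le> 1" "norm (\<gamma> t - a) = 1/32"
        using IVT'[of "\<lambda>t. norm (\<gamma> t - a)" 0 "1/32" 1, OF _ _ _ cg] pa2 \<psi>pa \<gamma>0 \<psi>p by auto
      have "\<psi> (\<psi> (\<gamma> t)) = \<gamma> t"
        using flow[of t] flow[of "t + 1"] per[of t] t by (simp add: add.assoc)
      moreover have "norm (\<psi> (\<psi> (\<gamma> t)) - (a + (1/2) *\<^sub>R (\<gamma> t - a))) < 2/256" by (rule E) (simp add: t)
      moreover have "\<gamma> t - (a + (1/2) *\<^sub>R (\<gamma> t - a)) = (1/2) *\<^sub>R (\<gamma> t - a)" by (rule half_lemma)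
      ultimately show False using t(3) by simp
    qed
  qed
qed

end
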